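(* For positive integers $r,c$, let $R_{r,c}=(c^r)$ be the rectangular partition with $r$ parts all equal to $c$. Then $$\mathbb{SG}(\mathcal{L}(R_{r,c}))=\begin{cases}0 & c>1,\ r>1,\ c+r\text{ even},\\ 2 & (c\le2\text{ or } r\le2)\text{ and } c+r \text{ odd},\\ 1&\text{otherwise}.\end{cases}$$
   Context: A partition is a finite non-increasing sequence of positive integers; $()$ is the empty partition. For non-negative $i,j$, $\lambda[i,j]$ is $(\lambda_{i+1}-j,\dots,\lambda_r-j)$ with all non-positive entries removed. LCTR: positions $\mathcal{L}(\lambda)$; if $\lambda\neq()$ the two moves go to $\mathcal{L}(\lambda[1,0])$ and $\mathcal{L}(\lambda[0,1])$; $\mathcal{L}(())$ is terminal. Normal play; $\mathbb{SG}(A)=\operatorname{mex}\{\mathbb{SG}(B):A\to B\}$. *)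

theory Defs
  imports Main
begin

text \<open>Partitions are represented as lists of naturals (non-increasing, positive entries).
  shift i j lam is lambda[i,j]: drop the first i parts, subtract j from the rest,
  and remove all non-positive entries.\<close>

definition shift :: "nat \<Rightarrow> nat \<Rightarrow> nat list \<Rightarrow> nat list" where
  "shift i j lam = filter (\<lambda>y. 0 < y) (map (\<lambda>y. y - j) (drop i lam))"

definition mex :: "nat set \<Rightarrow> nat" where
  "mex S = (LEAST n. n \<notin> S)"

definition is_partition :: "nat list \<Rightarrow> bool" where
  "is_partition lam \<longleftrightarrow> sorted_wrt (\<ge>) lam \<and> (\<forall>x\<in>set lam. 0 < x)"

function lctr_sg :: "nat list \<Rightarrow> nat" where
  "lctr_sg [] = 0"
| "lctr_sg (x # xs) =
     mex {lctr_sg (shift 1 0 (x # xs)), lctr_sg (shift 0 1 (x # xs))}"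
  by pat_completeness auto
termination
proof (relation "measure (\<lambda>l. length l + sum_list l)")
  fix x :: nat and xs
  have B: "length (filter (\<lambda>y. 0 < y) xs) + sum_list (filter (\<lambda>y. 0 < y) xs)
        \<le> length xs + sum_list xs" for xs :: "nat list"
    by (induction xs) auto
  show "(shift 1 0 (x # xs), x # xs) \<in> measure (\<lambda>l. length l + sum_list l)"
    using B[of xs] by (simp add: shift_def)
next
  fix x :: nat and xs :: "nat list"
  have A: "length (filter (\<lambda>y. 0 < y) (map (\<lambda>y. y - 1) xs))
          + sum_list (filter (\<lambda>y. 0 < y) (map (\<lambda>y. y - 1) xs))
        \<le> length xs + sum_list xs" for xs :: "nat list"
    by (induction xs) auto
  show "(shift 0 1 (x # xs), x # xs) \<in> measure (\<lambda>l. length l + sum_list l)"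
    using A[of xs] by (cases x) (auto simp: shift_def)
qed auto

end

theory Submission
  imports Defs
begin

definition g :: "nat \<Rightarrow> nat \<Rightarrow> nat" where
  "g r c = (if c > 1 \<and> r > 1 \<and> even (c + r) then 0
     else if (c \<le> 2 \<or> r \<le> 2) \<and> odd (c + r) then 2
     else 1)"

lemma mex0: "0 \<notin> S \<Longrightarrow> mex S = 0"
  unfolding mex_def by (rule Least_equality) auto
lemma mex1: "0 \<in> S \<Longrightarrow> 1 \<notin> S \<Longrightarrow> mex S = 1"
  unfolding mex_def apply (rule Least_equality) apply auto
  by (metis One_nat_def Suc_leI neq0_conv)
lemma mex2: "0 \<in> S \<Longrightarrow> 1 \<in> S \<Longrightarrow> 2 \<notin> S \<Longrightarrow> mex S = 2"
  unfolding mex_def apply (rule Least_equality) apply auto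
  by (metis One_nat_def less_2_cases not_le)

lemma mex_pair: "a \<le> 2 \<Longrightarrow> b \<le> 2 \<Longrightarrow> mex {a, b} =
  (if a \<noteq> 0 \<and> b \<noteq> 0 then 0 else if a \<noteq> 1 \<and> b \<noteq> 1 then 1 else 2)"
  apply (cases "a \<noteq> 0 \<and> b \<noteq> 0")
   apply (simp add: mex0)
  apply (cases "a \<noteq> 1 \<and> b \<noteq> 1")
   apply (rule trans[OF mex1]; auto)
  apply (rule trans[OF mex2]; auto)
  done

lemma shift1: "0 < c \<Longrightarrow> shift 1 0 (replicate r c) = replicate (r - 1) c"
  by (cases r) (auto simp: shift_def)

lemma shift2: "0 < c \<Longrightarrow> shift 0 1 (replicate r c) = (if c = 1 then [] else replicate r (c - 1))"
  by (induction r) (auto simp: shift_def)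

lemma main: "0 < r \<Longrightarrow> 0 < c \<Longrightarrow> lctr_sg (replicate r c) = g r c"
proof (induction "r + c" arbitrary: r c rule: less_induct)
  case less
  obtain r' where r: "r = Suc r'" using less.prems by (cases r) auto
  define a where "a = (if r = 1 then 0 else g (r - 1) c)"
  define b where "b = (if c = 1 then 0 else g r (c - 1))"
  have A: "lctr_sg (shift 1 0 (replicate r c)) = a"
    unfolding shift1[OF less.prems(2)] a_def using less by (cases "r = 1") auto
  have B: "lctr_sg (shift 0 1 (replicate r c)) = b"
    unfolding shift2[OF less.prems(2)] b_def using less by (cases "c = 1") auto
  have "lctr_sg (replicate r c) = mex {a, b}"
    using A B r by simp
  also have "\<dots> = (if a \<noteq> 0 \<and> b \<noteq> 0 then 0 else if a \<noteq> 1 \<and> b \<noteq> 1 then 1 else 2)"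
    by (rule mex_pair) (auto simp: a_def b_def g_def)
  also have "\<dots> = g r c"
    using less.prems unfolding a_def b_def g_def
    by (cases "r = 1"; cases "c = 1"; cases "r = 2"; cases "c = 2"; simp; presburger)
  finally show ?case .
qed

theorem mainTheorem12:
  fixes r c :: nat
  assumes "0 < r" and "0 < c"
  shows "lctr_sg (replicate r c) =
    (if c > 1 \<and> r > 1 \<and> even (c + r) then 0
     else if (c \<le> 2 \<or> r \<le> 2) \<and> odd (c + r) then 2
     else 1)"
  using main[OF assms] by (simp add: g_def)

end
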